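(* Let $X$ be a proper geodesic metric space with a free, proper, cocompact, isometric action of a finitely generated group $\Gamma$ (with fixed finite symmetric generating set $S$), and let $P$ be a space with a proper $\Gamma$-action. If $p:P\to\mathbb{R}^N$ is a proper map satisfying the Displacement Bound Condition $\|p(z)-p(\gamma z)\|\le\|\gamma\|_S$ for all $z\in P$, $\gamma\in\Gamma$, then there exists a continuous map $\alpha:X\times P\to\mathbb{R}^N$ satisfying: (L1) $\alpha$ is invariant under the diagonal $\Gamma$-action on $X\times P$; (L2) $\alpha|_{\{x\}\times P}$ is proper for every $x\in X$; (L3) $\alpha|_{X\times\{z\}}$ is 1-Lipschitz for every $z\in P$.
   Context: $\|\gamma\|_S$ denotes the word length of $\gamma$ with respect to $S$. *)

theory Defs
  imports "HOL-Analysis.Analysis" "HOL-Algebra.Group" "HOL-Algebra.Generated_Groups"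
begin

definition word_length :: "('g, 'b) monoid_scheme \<Rightarrow> 'g set \<Rightarrow> 'g \<Rightarrow> nat" where
  "word_length G S g =
     (LEAST n. \<exists>l. length l = n \<and> set l \<subseteq> S \<and> foldr (\<lambda>s acc. s \<otimes>\<^bsub>G\<^esub> acc) l \<one>\<^bsub>G\<^esub> = g)"

definition fin_sym_gen_set :: "('g, 'b) monoid_scheme \<Rightarrow> 'g set \<Rightarrow> bool" where
  "fin_sym_gen_set G S \<longleftrightarrow> finite S \<and> S \<subseteq> carrier G \<and>
     (\<forall>s\<in>S. inv\<^bsub>G\<^esub> s \<in> S) \<and> generate G S = carrier G"

definition is_action :: "('g, 'b) monoid_scheme \<Rightarrow> ('g \<Rightarrow> 'a \<Rightarrow> 'a) \<Rightarrow> bool" where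
  "is_action G \<phi> \<longleftrightarrow> (\<forall>x. \<phi> \<one>\<^bsub>G\<^esub> x = x) \<and>
     (\<forall>g\<in>carrier G. \<forall>h\<in>carrier G. \<forall>x. \<phi> (g \<otimes>\<^bsub>G\<^esub> h) x = \<phi> g (\<phi> h x))"

text \<open>Action by homeomorphisms (each element acts continuously; inverses then act continuously too).\<close>
definition continuous_action :: "('g, 'b) monoid_scheme \<Rightarrow> ('g \<Rightarrow> 'a::topological_space \<Rightarrow> 'a) \<Rightarrow> bool" where
  "continuous_action G \<phi> \<longleftrightarrow> is_action G \<phi> \<and> (\<forall>g\<in>carrier G. continuous_on UNIV (\<phi> g))"

definition free_action :: "('g, 'b) monoid_scheme \<Rightarrow> ('g \<Rightarrow> 'a \<Rightarrow> 'a) \<Rightarrow> bool" where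
  "free_action G \<phi> \<longleftrightarrow> (\<forall>g\<in>carrier G. \<forall>x. \<phi> g x = x \<longrightarrow> g = \<one>\<^bsub>G\<^esub>)"

definition proper_action :: "('g, 'b) monoid_scheme \<Rightarrow> ('g \<Rightarrow> 'a::topological_space \<Rightarrow> 'a) \<Rightarrow> bool" where
  "proper_action G \<phi> \<longleftrightarrow>
     (\<forall>K. compact K \<longrightarrow> finite {g \<in> carrier G. \<phi> g ` K \<inter> K \<noteq> {}})"

definition cocompact_action :: "('g, 'b) monoid_scheme \<Rightarrow> ('g \<Rightarrow> 'a::topological_space \<Rightarrow> 'a) \<Rightarrow> bool" where
  "cocompact_action G \<phi> \<longleftrightarrow> (\<exists>K. compact K \<and> (\<Union>g\<in>carrier G. \<phi> g ` K) = UNIV)"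

definition isometric_action :: "('g, 'b) monoid_scheme \<Rightarrow> ('g \<Rightarrow> 'a::metric_space \<Rightarrow> 'a) \<Rightarrow> bool" where
  "isometric_action G \<phi> \<longleftrightarrow> (\<forall>g\<in>carrier G. \<forall>x y. dist (\<phi> g x) (\<phi> g y) = dist x y)"

definition proper_metric_space :: "'a::metric_space itself \<Rightarrow> bool" where
  "proper_metric_space _ \<longleftrightarrow> (\<forall>(x::'a) r. compact (cball x r))"

definition geodesic_space :: "'a::metric_space itself \<Rightarrow> bool" where
  "geodesic_space _ \<longleftrightarrow> (\<forall>x y::'a. \<exists>c :: real \<Rightarrow> 'a. c 0 = x \<and> c (dist x y) = y \<and>
      (\<forall>s\<in>{0..dist x y}. \<forall>t\<in>{0..dist x y}. dist (c s) (c t) = \<bar>s - t\<bar>))"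

definition proper_map_fun :: "('a::topological_space \<Rightarrow> 'b::topological_space) \<Rightarrow> bool" where
  "proper_map_fun f \<longleftrightarrow> continuous_on UNIV f \<and> (\<forall>K. compact K \<longrightarrow> compact (f -` K))"

end

theory Submission
  imports Defs
begin


definition prodl :: "('g, 'b) monoid_scheme \<Rightarrow> 'g list \<Rightarrow> 'g" where
  "prodl G l = foldr (\<lambda>s acc. s \<otimes>\<^bsub>G\<^esub> acc) l \<one>\<^bsub>G\<^esub>"

lemma foldr_prodl:
  assumes "group G" "set l \<subseteq> carrier G" "acc \<in> carrier G"
  shows "foldr (\<lambda>s acc. s \<otimes>\<^bsub>G\<^esub> acc) l acc = prodl G l \<otimes>\<^bsub>G\<^esub> acc \<and> prodl G l \<in> carrier G"
  using assms(2,3)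
proof (induction l)
  case Nil
  then show ?case using assms(1) by (simp add: prodl_def group.is_monoid monoid.l_one)
next
  case (Cons a l)
  interpret group G by fact
  from Cons have a: "a \<in> carrier G" and l: "set l \<subseteq> carrier G" by auto
  from Cons.IH[OF l Cons.prems(2)] have IH: "foldr (\<lambda>s acc. s \<otimes>\<^bsub>G\<^esub> acc) l acc = prodl G l \<otimes>\<^bsub>G\<^esub> acc" "prodl G l \<in> carrier G" by auto
  have "prodl G (a # l) = a \<otimes>\<^bsub>G\<^esub> prodl G l" by (simp add: prodl_def)
  then show ?case using IH a Cons.prems(2) by (simp add: m_assoc)
qed

lemma prodl_append:
  assumes "group G" "set l1 \<subseteq> carrier G" "set l2 \<subseteq> carrier G"
  shows "prodl G (l1 @ l2) = prodl G l1 \<otimes>\<^bsub>G\<^esub> prodl G l2"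
proof -
  have c2: "prodl G l2 \<in> carrier G" using foldr_prodl[OF assms(1) assms(3), of "\<one>\<^bsub>G\<^esub>"] assms(1)
    by (simp add: group.is_monoid monoid.one_closed)
  have "prodl G (l1 @ l2) = foldr (\<lambda>s acc. s \<otimes>\<^bsub>G\<^esub> acc) l1 (prodl G l2)"
    by (simp add: prodl_def)
  then show ?thesis using foldr_prodl[OF assms(1) assms(2) c2] by simp
qed

lemma reps_exist:
  assumes "group G" "fin_sym_gen_set G S" "g \<in> generate G S"
  shows "\<exists>l. set l \<subseteq> S \<and> prodl G l = g"
  using assms(3)
proof (induction rule: generate.induct)
  case one
  then show ?case by (intro exI[of _ "[]"]) (simp add: prodl_def)
next
  case (incl h)
  then have "h \<in> carrier G" using assms(2) by (auto simp: fin_sym_gen_set_def)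
  then have "prodl G [h] = h" using assms(1) by (simp add: prodl_def group.is_monoid monoid.r_one)
  then show ?case using incl by (intro exI[of _ "[h]"]) auto
next
  case (inv h)
  then have h: "inv\<^bsub>G\<^esub> h \<in> S" "inv\<^bsub>G\<^esub> h \<in> carrier G" using assms(2) by (auto simp: fin_sym_gen_set_def)
  then have "prodl G [inv\<^bsub>G\<^esub> h] = inv\<^bsub>G\<^esub> h" using assms(1) by (simp add: prodl_def group.is_monoid monoid.r_one)
  then show ?case using h by (intro exI[of _ "[inv\<^bsub>G\<^esub> h]"]) auto
next
  case (eng h1 h2)
  then obtain l1 l2 where "set l1 \<subseteq> S" "prodl G l1 = h1" "set l2 \<subseteq> S" "prodl G l2 = h2" by blast
  moreover have "S \<subseteq> carrier G" using assms(2) by (auto simp: fin_sym_gen_set_def)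
  ultimately show ?case using prodl_append[OF assms(1), of l1 l2]
    by (intro exI[of _ "l1 @ l2"]) auto
qed

lemma wl_le:
  assumes "set l \<subseteq> S" "prodl G l = g"
  shows "word_length G S g \<le> length l"
  unfolding word_length_def using assms unfolding prodl_def
  by (intro Least_le) auto

lemma wl_attained:
  assumes "group G" "fin_sym_gen_set G S" "g \<in> carrier G"
  shows "\<exists>l. length l = word_length G S g \<and> set l \<subseteq> S \<and> prodl G l = g"
proof -
  have "g \<in> generate G S" using assms(2,3) by (simp add: fin_sym_gen_set_def)
  then obtain l where "set l \<subseteq> S" "prodl G l = g" using reps_exist[OF assms(1,2)] by blast
  then have "\<exists>n l. length l = n \<and> set l \<subseteq> S \<and> foldr (\<lambda>s acc. s \<otimes>\<^bsub>G\<^esub> acc) l \<one>\<^bsub>G\<^esub> = g"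
    by (auto simp: prodl_def)
  from LeastI_ex[OF this] show ?thesis unfolding word_length_def prodl_def by blast
qed

lemma wl_mult:
  assumes "group G" "fin_sym_gen_set G S" "g \<in> carrier G" "h \<in> carrier G"
  shows "word_length G S (g \<otimes>\<^bsub>G\<^esub> h) \<le> word_length G S g + word_length G S h"
proof -
  obtain l1 where l1: "length l1 = word_length G S g" "set l1 \<subseteq> S" "prodl G l1 = g"
    using wl_attained[OF assms(1,2,3)] by blast
  obtain l2 where l2: "length l2 = word_length G S h" "set l2 \<subseteq> S" "prodl G l2 = h"
    using wl_attained[OF assms(1,2,4)] by blast
  have "S \<subseteq> carrier G" using assms(2) by (auto simp: fin_sym_gen_set_def)
  then have "prodl G (l1 @ l2) = g \<otimes>\<^bsub>G\<^esub> h" using prodl_append[OF assms(1), of l1 l2] l1 l2 by auto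
  then have "word_length G S (g \<otimes>\<^bsub>G\<^esub> h) \<le> length (l1 @ l2)" using l1 l2 by (intro wl_le) auto
  then show ?thesis using l1 l2 by simp
qed

lemma min_image_continuous:
  fixes f :: "'i \<Rightarrow> 'a::topological_space \<Rightarrow> real"
  assumes "finite F" "F \<noteq> {}" "\<And>i. i \<in> F \<Longrightarrow> continuous_on UNIV (f i)"
  shows "continuous_on UNIV (\<lambda>z. Min ((\<lambda>i. f i z) ` F))"
  using assms
proof (induction F rule: finite_ne_induct)
  case (singleton x)
  then show ?case by simp
next
  case (insert x F)
  have "(\<lambda>z. Min ((\<lambda>i. f i z) ` insert x F)) = (\<lambda>z. min (f x z) (Min ((\<lambda>i. f i z) ` F)))"
    using insert by (auto simp: Min_insert)
  then show ?case using insert by (auto intro!: continuous_on_min)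
qed



theorem proposition3:
  fixes G :: "('g, 'b) monoid_scheme" and S :: "'g set"
    and \<phi> :: "'g \<Rightarrow> 'x::metric_space \<Rightarrow> 'x"
    and \<psi> :: "'g \<Rightarrow> 'p::topological_space \<Rightarrow> 'p"
    and p :: "'p \<Rightarrow> real ^ 'n"
  assumes "group G"
    and "fin_sym_gen_set G S"
    and "proper_metric_space TYPE('x)"
    and "geodesic_space TYPE('x)"
    and "continuous_action G \<phi>" and "isometric_action G \<phi>" and "free_action G \<phi>"
    and "proper_action G \<phi>" and "cocompact_action G \<phi>"
    and "continuous_action G \<psi>" and "proper_action G \<psi>"
    and "proper_map_fun p"
    and "\<And>z g. g \<in> carrier G \<Longrightarrow> norm (p z - p (\<psi> g z)) \<le> real (word_length G S g)"
  shows "\<exists>\<alpha> :: 'x \<times> 'p \<Rightarrow> real ^ 'n.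
           continuous_on UNIV \<alpha>
         \<and> (\<forall>g\<in>carrier G. \<forall>x z. \<alpha> (\<phi> g x, \<psi> g z) = \<alpha> (x, z))
         \<and> (\<forall>x. proper_map_fun (\<lambda>z. \<alpha> (x, z)))
         \<and> (\<forall>z. \<forall>x y. dist (\<alpha> (x, z)) (\<alpha> (y, z)) \<le> dist x y)"
proof -
  interpret G: group G by fact
  have phi1: "\<And>x. \<phi> \<one>\<^bsub>G\<^esub> x = x" and phim: "\<And>g h x. g \<in> carrier G \<Longrightarrow> h \<in> carrier G \<Longrightarrow> \<phi> (g \<otimes>\<^bsub>G\<^esub> h) x = \<phi> g (\<phi> h x)"
    using assms(5) unfolding continuous_action_def is_action_def by auto
  have psi1: "\<And>x. \<psi> \<one>\<^bsub>G\<^esub> x = x" and psim: "\<And>g h x. g \<in> carrier G \<Longrightarrow> h \<in> carrier G \<Longrightarrow> \<psi> (g \<otimes>\<^bsub>G\<^esub> h) x = \<psi> g (\<psi> h x)"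
    and psic: "\<And>g. g \<in> carrier G \<Longrightarrow> continuous_on UNIV (\<psi> g)"
    using assms(10) unfolding continuous_action_def is_action_def by auto
  have iso: "\<And>g x y. g \<in> carrier G \<Longrightarrow> dist (\<phi> g x) (\<phi> g y) = dist x y"
    using assms(6) unfolding isometric_action_def by auto
  have cb: "\<And>x r. compact (cball (x::'x) r)" using assms(3) unfolding proper_metric_space_def by auto
  have geo: "\<And>x y::'x. \<exists>c :: real \<Rightarrow> 'x. c 0 = x \<and> c (dist x y) = y \<and>
      (\<forall>s\<in>{0..dist x y}. \<forall>t\<in>{0..dist x y}. dist (c s) (c t) = \<bar>s - t\<bar>)"
    using assms(4) unfolding geodesic_space_def by auto
  have pcont: "continuous_on UNIV p" and pprop: "\<And>K. compact K \<Longrightarrow> compact (p -` K)"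
    using assms(12) unfolding proper_map_fun_def by auto
  have prop\<phi>: "\<And>K. compact K \<Longrightarrow> finite {g \<in> carrier G. \<phi> g ` K \<inter> K \<noteq> {}}"
    using assms(8) unfolding proper_action_def by auto
  obtain K where K: "compact K" "(\<Union>g\<in>carrier G. \<phi> g ` K) = UNIV"
    using assms(9) unfolding cocompact_action_def by auto
  define x0 :: 'x where "x0 = undefined"
  obtain e where e: "\<forall>y\<in>K. dist x0 y \<le> e"
    using compact_imp_bounded[OF K(1)] bounded_any_center by metis
  define R0 where "R0 = max 0 e"
  have R0: "0 \<le> R0" "\<And>y. y \<in> K \<Longrightarrow> dist y x0 \<le> R0" using e by (auto simp: R0_def dist_commute)
  have near: "\<exists>h\<in>carrier G. dist y (\<phi> h x0) \<le> R0" for y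
  proof -
    from K(2) have "y \<in> (\<Union>g\<in>carrier G. \<phi> g ` K)" by auto
    then obtain g k where "g \<in> carrier G" "k \<in> K" "y = \<phi> g k" by auto
    then show ?thesis using iso R0 by (intro bexI[of _ g]) auto
  qed
  have fin_ball: "finite {g \<in> carrier G. dist (\<phi> g x) y \<le> r}" for x y r
  proof -
    let ?K = "cball y (\<bar>r\<bar> + dist x y)"
    have "{g \<in> carrier G. dist (\<phi> g x) y \<le> r} \<subseteq> {g \<in> carrier G. \<phi> g ` ?K \<inter> ?K \<noteq> {}}"
    proof
      fix g assume g: "g \<in> {g \<in> carrier G. dist (\<phi> g x) y \<le> r}"
      have "x \<in> ?K" by (auto simp: dist_commute)
      moreover have "\<phi> g x \<in> ?K"
      proof -
        have "dist (\<phi> g x) y \<le> r" using g by simp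
        then have "dist y (\<phi> g x) \<le> r" by (simp add: dist_commute)
        then show ?thesis using abs_ge_self[of r] zero_le_dist[of x y] unfolding mem_cball by linarith
      qed
      ultimately show "g \<in> {g \<in> carrier G. \<phi> g ` ?K \<inter> ?K \<noteq> {}}" using g by blast
    qed
    then show ?thesis using prop\<phi>[OF cb] finite_subset by blast
  qed
  text \<open>Milnor-Svarc type estimate\<close>
  define F0 where "F0 = {g \<in> carrier G. dist (\<phi> g x0) x0 \<le> 2 * R0 + 1}"
  define M where "M = real (Max (word_length G S ` F0))"
  have M0: "0 \<le> M" by (simp add: M_def)
  have wlF0: "real (word_length G S g) \<le> M" if "g \<in> carrier G" "dist (\<phi> g x0) x0 \<le> 2 * R0 + 1" for g
  proof -
    have "finite F0" unfolding F0_def by (rule fin_ball)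
    moreover have "g \<in> F0" using that by (simp add: F0_def)
    ultimately show ?thesis unfolding M_def by simp
  qed
  have Q: "\<forall>\<gamma>\<in>carrier G. \<forall>y. dist y (\<phi> \<gamma> x0) \<le> R0 \<longrightarrow> dist x0 y \<le> real n \<longrightarrow> real (word_length G S \<gamma>) \<le> M * (real n + 1)" for n
  proof (induction n)
    case 0
    show ?case
    proof (intro ballI allI impI)
      fix \<gamma> y assume g: "\<gamma> \<in> carrier G" and h: "dist y (\<phi> \<gamma> x0) \<le> R0" "dist x0 y \<le> real 0"
      then have "y = x0" by simp
      then have "dist (\<phi> \<gamma> x0) x0 \<le> 2 * R0 + 1" using h R0 by (simp add: dist_commute)
      then show "real (word_length G S \<gamma>) \<le> M * (real 0 + 1)" using wlF0 g by simp
    qed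
  next
    case (Suc n)
    show ?case
    proof (intro ballI allI impI)
      fix \<gamma> y assume g: "\<gamma> \<in> carrier G" and h: "dist y (\<phi> \<gamma> x0) \<le> R0" "dist x0 y \<le> real (Suc n)"
      show "real (word_length G S \<gamma>) \<le> M * (real (Suc n) + 1)"
      proof (cases "dist x0 y \<le> real n")
        case True
        then have "real (word_length G S \<gamma>) \<le> M * (real n + 1)" using Suc g h by blast
        also have "\<dots> \<le> M * (real (Suc n) + 1)" using M0 by (intro mult_left_mono) auto
        finally show ?thesis .
      next
        case False
        define L where "L = dist x0 y"
        obtain c :: "real \<Rightarrow> 'x" where c: "c 0 = x0" "c L = y"
          "\<forall>s\<in>{0..L}. \<forall>t\<in>{0..L}. dist (c s) (c t) = \<bar>s - t\<bar>"
          using geo[of x0 y] unfolding L_def by blast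
        define t where "t = max 0 (L - 1)"
        have tL: "0 \<le> t" "t \<le> L" "t \<le> real n" "L - t \<le> 1"
          using False h(2) by (auto simp: t_def L_def)
        define w where "w = c t"
        have L0: "0 \<le> L" by (simp add: L_def)
        have d1: "dist (c 0) (c t) = \<bar>0 - t\<bar>" using c(3) L0 tL by simp
        have d2: "dist (c t) (c L) = \<bar>t - L\<bar>" using c(3) L0 tL by simp
        have dw: "dist x0 w = t" using d1 c(1) tL unfolding w_def by simp
        have dwy: "dist w y \<le> 1" using d2 c(2) tL unfolding w_def by simp
        obtain hh where hh: "hh \<in> carrier G" "dist w (\<phi> hh x0) \<le> R0" using near by blast
        have IH: "real (word_length G S hh) \<le> M * (real n + 1)"
          using Suc hh dw tL by blast
        define k where "k = inv\<^bsub>G\<^esub> hh \<otimes>\<^bsub>G\<^esub> \<gamma>"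
        have k: "k \<in> carrier G" using hh g by (simp add: k_def)
        have hk: "hh \<otimes>\<^bsub>G\<^esub> k = \<gamma>" using hh g by (simp add: k_def G.m_assoc[symmetric])
        have "dist (\<phi> k x0) x0 = dist (\<phi> hh (\<phi> k x0)) (\<phi> hh x0)" using iso hh by simp
        also have "\<dots> = dist (\<phi> \<gamma> x0) (\<phi> hh x0)" using phim[OF hh(1) k] hk by simp
        also have "\<dots> \<le> dist (\<phi> \<gamma> x0) y + dist y w + dist w (\<phi> hh x0)"
          using dist_triangle[of "\<phi> \<gamma> x0" "\<phi> hh x0" y] dist_triangle[of y "\<phi> hh x0" w] by linarith
        also have "\<dots> \<le> 2 * R0 + 1" using h(1) dwy hh(2) by (simp add: dist_commute)
        finally have "real (word_length G S k) \<le> M" using wlF0 k by blast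
        moreover have "word_length G S \<gamma> \<le> word_length G S hh + word_length G S k"
          using wl_mult[OF assms(1,2) hh(1) k] hk by simp
        ultimately show ?thesis using IH by (simp add: algebra_simps)
      qed
    qed
  qed
  define B where "B = 2 * M"
  have MS: "real (word_length G S \<gamma>) \<le> M * dist (\<phi> \<gamma> x0) x0 + B" if g: "\<gamma> \<in> carrier G" for \<gamma>
  proof -
    define d where "d = dist (\<phi> \<gamma> x0) x0"
    define n where "n = nat \<lceil>d\<rceil>"
    have d0: "0 \<le> d" by (simp add: d_def)
    have nn: "real n = real_of_int \<lceil>d\<rceil>" using d0 by (simp add: n_def)
    have "d \<le> real n" using nn by simp
    have "real_of_int \<lceil>d\<rceil> < d + 1" using ceiling_correct[of d] by linarith
    then have "real n \<le> d + 1" using nn by simp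
    have "real (word_length G S \<gamma>) \<le> M * (real n + 1)"
    proof -
      have y1: "dist (\<phi> \<gamma> x0) (\<phi> \<gamma> x0) \<le> R0" using R0 by simp
      have y2: "dist x0 (\<phi> \<gamma> x0) \<le> real n" using \<open>d \<le> real n\<close> by (simp add: d_def dist_commute)
      show ?thesis using Q[of n] g y1 y2 by blast
    qed
    also have "\<dots> \<le> M * (d + 2)" using M0 \<open>real n \<le> d + 1\<close> by (intro mult_left_mono) auto
    finally show ?thesis by (simp add: B_def d_def algebra_simps)
  qed
  define c where "c = M + 1"
  define T where "T i \<gamma> x z = p (\<psi> \<gamma> z) $ i + c * dist (\<phi> \<gamma> x) x0" for i \<gamma> x z
  define r where "r x = B + (2 * M + 1) * dist x x0" for x
  define Fx where "Fx x = {\<gamma> \<in> carrier G. dist (\<phi> \<gamma> x) x0 \<le> r x}" for x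
  have lowT: "T i \<gamma> x z \<ge> p z $ i - M * dist x x0 - B + dist (\<phi> \<gamma> x) x0" if g: "\<gamma> \<in> carrier G" for i \<gamma> x z
  proof -
    have "\<bar>p z $ i - p (\<psi> \<gamma> z) $ i\<bar> \<le> norm (p z - p (\<psi> \<gamma> z))"
      using component_le_norm_cart[of "p z - p (\<psi> \<gamma> z)" i] by simp
    also have "\<dots> \<le> real (word_length G S \<gamma>)" using assms(13) g by blast
    also have "\<dots> \<le> M * dist (\<phi> \<gamma> x0) x0 + B" using MS g by blast
    also have "\<dots> \<le> M * (dist x x0 + dist (\<phi> \<gamma> x) x0) + B"
    proof -
      have "dist (\<phi> \<gamma> x0) x0 \<le> dist (\<phi> \<gamma> x0) (\<phi> \<gamma> x) + dist (\<phi> \<gamma> x) x0" by (rule dist_triangle)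
      also have "\<dots> = dist x x0 + dist (\<phi> \<gamma> x) x0" using iso g by (simp add: dist_commute)
      finally show ?thesis using M0 by (simp add: mult_left_mono)
    qed
    finally have "p (\<psi> \<gamma> z) $ i \<ge> p z $ i - M * (dist x x0 + dist (\<phi> \<gamma> x) x0) - B" by linarith
    then show ?thesis unfolding T_def c_def by (simp add: algebra_simps)
  qed
  have T1: "T i \<one>\<^bsub>G\<^esub> x z = p z $ i + c * dist x x0" for i x z
    by (simp add: T_def phi1 psi1)
  have notF: "T i \<one>\<^bsub>G\<^esub> x z \<le> T i \<gamma> x z" if "\<gamma> \<in> carrier G" "\<gamma> \<notin> Fx x" for i \<gamma> x z
  proof -
    have "dist (\<phi> \<gamma> x) x0 > r x" using that by (simp add: Fx_def)
    then show ?thesis using lowT[where i=i and x=x and z=z, OF that(1)] T1[where i=i and x=x and z=z]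
      by (simp add: r_def c_def B_def algebra_simps)
  qed
  have finF: "finite (Fx x)" for x unfolding Fx_def by (rule fin_ball)
  have oneF: "\<one>\<^bsub>G\<^esub> \<in> Fx x" for x
  proof -
    have "dist x x0 \<le> (2 * M + 1) * dist x x0" using M0 by (simp add: algebra_simps)
    then show ?thesis using M0 by (simp add: Fx_def phi1 r_def B_def)
  qed
  have minim: "\<exists>\<gamma>0\<in>Fx x. (\<forall>\<gamma>\<in>carrier G. T i \<gamma>0 x z \<le> T i \<gamma> x z) \<and> T i \<gamma>0 x z = Min ((\<lambda>\<gamma>. T i \<gamma> x z) ` Fx x)" for i x z
  proof -
    let ?m = "Min ((\<lambda>\<gamma>. T i \<gamma> x z) ` Fx x)"
    have ne: "(\<lambda>\<gamma>. T i \<gamma> x z) ` Fx x \<noteq> {}" using oneF by blast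
    have "?m \<in> (\<lambda>\<gamma>. T i \<gamma> x z) ` Fx x" using Min_in[OF finite_imageI[OF finF] ne] .
    then obtain \<gamma>0 where g0: "\<gamma>0 \<in> Fx x" "?m = T i \<gamma>0 x z" by auto
    have "T i \<gamma>0 x z \<le> T i \<gamma> x z" if "\<gamma> \<in> carrier G" for \<gamma>
    proof (cases "\<gamma> \<in> Fx x")
      case True
      have "?m \<le> T i \<gamma> x z" by (rule Min_le) (use finF True in auto)
      then show ?thesis using g0 by simp
    next
      case False
      have "?m \<le> T i \<one>\<^bsub>G\<^esub> x z" by (rule Min_le) (use finF oneF in auto)
      then have "T i \<gamma>0 x z \<le> T i \<one>\<^bsub>G\<^esub> x z" using g0 by simp
      then show ?thesis using notF[where i=i and z=z, OF that False] by linarith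
    qed
    then show ?thesis using g0 by auto
  qed
  define a where "a i x z = Inf ((\<lambda>\<gamma>. T i \<gamma> x z) ` carrier G)" for i x z
  have a_min: "\<exists>\<gamma>0\<in>carrier G. a i x z = T i \<gamma>0 x z \<and> a i x z = Min ((\<lambda>\<gamma>. T i \<gamma> x z) ` Fx x) \<and> (\<forall>\<gamma>\<in>carrier G. a i x z \<le> T i \<gamma> x z)" for i x z
  proof -
    obtain \<gamma>0 where g0: "\<gamma>0\<in>Fx x" "\<forall>\<gamma>\<in>carrier G. T i \<gamma>0 x z \<le> T i \<gamma> x z" "T i \<gamma>0 x z = Min ((\<lambda>\<gamma>. T i \<gamma> x z) ` Fx x)"
      using minim by blast
    have g0c: "\<gamma>0 \<in> carrier G" using g0(1) by (simp add: Fx_def)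
    have "a i x z = T i \<gamma>0 x z" unfolding a_def
    proof (rule cInf_eq_minimum)
      show "T i \<gamma>0 x z \<in> (\<lambda>\<gamma>. T i \<gamma> x z) ` carrier G" using g0c by blast
      show "\<And>v. v \<in> (\<lambda>\<gamma>. T i \<gamma> x z) ` carrier G \<Longrightarrow> T i \<gamma>0 x z \<le> v" using g0(2) by blast
    qed
    then have e: "a i x z = T i \<gamma>0 x z" .
    have e2: "a i x z = Min ((\<lambda>\<gamma>. T i \<gamma> x z) ` Fx x)" using e g0(3) by (rule trans)
    have e3: "\<forall>\<gamma>\<in>carrier G. a i x z \<le> T i \<gamma> x z" using g0(2) unfolding e .
    show ?thesis using g0c e e2 e3 by blast
  qed
  have a_le: "a i x z \<le> T i \<gamma> x z" if "\<gamma> \<in> carrier G" for i x z \<gamma>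
    using a_min[where i=i and x=x and z=z] that by blast
  have a_lip1: "a i x z \<le> a i y z + c * dist x y" for i x y z
  proof -
    obtain \<gamma>0 where g0: "\<gamma>0 \<in> carrier G" "a i y z = T i \<gamma>0 y z" using a_min by blast
    have "dist (\<phi> \<gamma>0 x) x0 \<le> dist (\<phi> \<gamma>0 x) (\<phi> \<gamma>0 y) + dist (\<phi> \<gamma>0 y) x0" by (rule dist_triangle)
    also have "\<dots> = dist x y + dist (\<phi> \<gamma>0 y) x0" using iso g0 by simp
    finally have "c * dist (\<phi> \<gamma>0 x) x0 \<le> c * (dist x y + dist (\<phi> \<gamma>0 y) x0)"
      using M0 by (intro mult_left_mono) (auto simp: c_def)
    then have "T i \<gamma>0 x z \<le> T i \<gamma>0 y z + c * dist x y" by (simp add: T_def algebra_simps)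
    then show ?thesis using a_le[where i=i and x=x and z=z, OF g0(1)] g0 by linarith
  qed
  have a_lip: "\<bar>a i x z - a i y z\<bar> \<le> c * dist x y" for i x y z
    using a_lip1[where i=i and x=x and y=y and z=z] a_lip1[where i=i and x=y and y=x and z=z] by (simp add: dist_commute abs_le_iff)
  have Tcont: "continuous_on UNIV (\<lambda>z. T i \<gamma> x z)" if "\<gamma> \<in> carrier G" for i \<gamma> x
  proof -
    have "continuous_on UNIV (\<lambda>z. p (\<psi> \<gamma> z))"
      by (rule continuous_on_compose2[OF pcont psic[OF that]]) auto
    then show ?thesis unfolding T_def by (intro continuous_intros)
  qed
  have a_cont_z: "continuous_on UNIV (\<lambda>z. a i x z)" for i x
  proof -
    have "(\<lambda>z. a i x z) = (\<lambda>z. Min ((\<lambda>\<gamma>. T i \<gamma> x z) ` Fx x))" using a_min by (auto intro!: ext)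
    moreover have "continuous_on UNIV (\<lambda>z. Min ((\<lambda>\<gamma>. T i \<gamma> x z) ` Fx x))"
      using oneF finF by (intro min_image_continuous Tcont) (auto simp: Fx_def)
    ultimately show ?thesis by simp
  qed
  have a_bound: "\<bar>a i x z - p z $ i\<bar> \<le> c * dist x x0 + M * dist x x0 + B" for i x z
  proof -
    have up: "a i x z \<le> p z $ i + c * dist x x0" using a_le[where i=i and x=x and z=z and \<gamma>="\<one>\<^bsub>G\<^esub>"] T1[where i=i and x=x and z=z] by simp
    obtain \<gamma>0 where g0: "\<gamma>0 \<in> carrier G" "a i x z = T i \<gamma>0 x z" using a_min by blast
    have "a i x z \<ge> p z $ i - M * dist x x0 - B" using lowT[where i=i and x=x and z=z, OF g0(1)] g0(2) zero_le_dist[of "\<phi> \<gamma>0 x" x0] by linarith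
    moreover have "c * dist x x0 = M * dist x x0 + dist x x0" by (simp add: c_def algebra_simps)
    moreover have "0 \<le> M * dist x x0" using M0 by simp
    moreover have "0 \<le> B" using M0 by (simp add: B_def)
    ultimately show ?thesis using up zero_le_dist[of x x0] unfolding abs_le_iff by (intro conjI; linarith)
  qed
  have a_cont: "continuous_on UNIV (\<lambda>w. a i (fst w) (snd w))" for i
    unfolding continuous_on_def
  proof (intro ballI)
    fix w :: "'x \<times> 'p" assume "w \<in> UNIV"
    obtain x1 z1 where w: "w = (x1, z1)" by force
    have c1: "continuous_on UNIV (\<lambda>w. a i x1 (snd w))"
      by (rule continuous_on_compose2[OF a_cont_z continuous_on_snd]) auto
    have "((\<lambda>w. a i x1 (snd w)) \<longlongrightarrow> a i x1 (snd w)) (at w within UNIV)"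
      using c1 unfolding continuous_on_def by blast
    then have t1: "((\<lambda>w. a i x1 (snd w)) \<longlongrightarrow> a i x1 z1) (at w within UNIV)" using w by simp
    have t0: "((\<lambda>w. c * dist (fst w) x1) \<longlongrightarrow> 0) (at w within UNIV)"
    proof -
      have "((\<lambda>w. c * dist (fst w) x1) \<longlongrightarrow> c * dist (fst w) x1) (at w within UNIV)"
        by (intro tendsto_intros)
      then show ?thesis using w by simp
    qed
    have t2: "((\<lambda>w. a i (fst w) (snd w) - a i x1 (snd w)) \<longlongrightarrow> 0) (at w within UNIV)"
      by (rule Lim_null_comparison[OF _ t0]) (auto simp: a_lip)
    have "((\<lambda>w. a i x1 (snd w) + (a i (fst w) (snd w) - a i x1 (snd w))) \<longlongrightarrow> a i x1 z1 + 0) (at w within UNIV)"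
      by (rule tendsto_add[OF t1 t2])
    then show "((\<lambda>w. a i (fst w) (snd w)) \<longlongrightarrow> a i (fst w) (snd w)) (at w within UNIV)" using w by simp
  qed
  define L where "L = real CARD('n) * c"
  have Lpos: "L > 0" using M0 by (simp add: L_def c_def)
  define \<alpha> where "\<alpha> w = (\<chi> i. a i (fst w) (snd w) / L)" for w
  have P1: "continuous_on UNIV \<alpha>"
    unfolding \<alpha>_def by (intro continuous_intros a_cont) (use Lpos in simp)
  have P2: "\<forall>g\<in>carrier G. \<forall>x z. \<alpha> (\<phi> g x, \<psi> g z) = \<alpha> (x, z)"
  proof (intro ballI allI)
    fix g x z assume g: "g \<in> carrier G"
    have rc: "(\<lambda>\<gamma>. \<gamma> \<otimes>\<^bsub>G\<^esub> g) ` carrier G = carrier G"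
    proof
      show "(\<lambda>\<gamma>. \<gamma> \<otimes>\<^bsub>G\<^esub> g) ` carrier G \<subseteq> carrier G" using g by auto
      show "carrier G \<subseteq> (\<lambda>\<gamma>. \<gamma> \<otimes>\<^bsub>G\<^esub> g) ` carrier G"
      proof
        fix y assume y: "y \<in> carrier G"
        have "y = (y \<otimes>\<^bsub>G\<^esub> inv\<^bsub>G\<^esub> g) \<otimes>\<^bsub>G\<^esub> g" using y g by (simp add: G.m_assoc)
        then show "y \<in> (\<lambda>\<gamma>. \<gamma> \<otimes>\<^bsub>G\<^esub> g) ` carrier G" using y g by blast
      qed
    qed
    have "a i (\<phi> g x) (\<psi> g z) = a i x z" for i
    proof -
      have "(\<lambda>\<gamma>. T i \<gamma> (\<phi> g x) (\<psi> g z)) ` carrier G = (\<lambda>\<gamma>. T i (\<gamma> \<otimes>\<^bsub>G\<^esub> g) x z) ` carrier G"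
        using g by (intro image_cong) (auto simp: T_def phim psim)
      also have "\<dots> = (\<lambda>\<gamma>. T i \<gamma> x z) ` ((\<lambda>\<gamma>. \<gamma> \<otimes>\<^bsub>G\<^esub> g) ` carrier G)" by (simp add: image_image)
      also have "\<dots> = (\<lambda>\<gamma>. T i \<gamma> x z) ` carrier G" using rc by simp
      finally show ?thesis by (simp add: a_def)
    qed
    then show "\<alpha> (\<phi> g x, \<psi> g z) = \<alpha> (x, z)" by (simp add: \<alpha>_def)
  qed
  have P4: "\<forall>z. \<forall>x y. dist (\<alpha> (x, z)) (\<alpha> (y, z)) \<le> dist x y"
  proof (intro allI)
    fix z x y
    have "dist (\<alpha> (x, z)) (\<alpha> (y, z)) = norm (\<alpha> (x, z) - \<alpha> (y, z))" by (simp add: dist_norm)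
    also have "\<dots> \<le> (\<Sum>i\<in>UNIV. \<bar>(\<alpha> (x, z) - \<alpha> (y, z)) $ i\<bar>)" by (rule norm_le_l1_cart)
    also have "\<dots> \<le> (\<Sum>i\<in>(UNIV::'n set). c * dist x y / L)"
    proof (rule sum_mono)
      fix i :: 'n
      have "\<bar>(\<alpha> (x, z) - \<alpha> (y, z)) $ i\<bar> = \<bar>a i x z - a i y z\<bar> / L"
        using Lpos by (simp add: \<alpha>_def diff_divide_distrib[symmetric])
      also have "\<dots> \<le> c * dist x y / L" using a_lip Lpos by (intro divide_right_mono) auto
      finally show "\<bar>(\<alpha> (x, z) - \<alpha> (y, z)) $ i\<bar> \<le> c * dist x y / L" .
    qed
    also have "\<dots> = dist x y" using Lpos M0 by (simp add: L_def c_def)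
    finally show "dist (\<alpha> (x, z)) (\<alpha> (y, z)) \<le> dist x y" .
  qed
  have P3: "proper_map_fun (\<lambda>z. \<alpha> (x, z))" for x
  proof -
    have cz: "continuous_on UNIV (\<lambda>z. \<alpha> (x, z))"
    proof -
      have "continuous_on UNIV (\<lambda>z. \<chi> i. a i x z / L)"
        by (intro continuous_on_vec_lambda continuous_on_divide a_cont_z continuous_on_const) (use Lpos in auto)
      then show ?thesis by (simp add: \<alpha>_def)
    qed
    have "compact ((\<lambda>z. \<alpha> (x, z)) -` Kc)" if Kc: "compact Kc" for Kc
    proof -
      obtain b where b: "b > 0" "\<forall>v\<in>Kc. norm v \<le> b" using compact_imp_bounded[OF Kc] bounded_pos by metis
      define D where "D = c * dist x x0 + M * dist x x0 + B"
      define R' where "R' = real CARD('n) * (L * b + D)"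
      have sub: "(\<lambda>z. \<alpha> (x, z)) -` Kc \<subseteq> p -` cball 0 R'"
      proof
        fix z assume z: "z \<in> (\<lambda>z. \<alpha> (x, z)) -` Kc"
        have nb: "norm (\<alpha> (x, z)) \<le> b" using z b by auto
        have pi: "\<bar>p z $ i\<bar> \<le> L * b + D" for i
        proof -
          have "\<bar>\<alpha> (x, z) $ i\<bar> \<le> b" using component_le_norm_cart[of "\<alpha> (x, z)" i] nb by linarith
          then have "\<bar>a i x z\<bar> / L \<le> b" using Lpos by (simp add: \<alpha>_def)
          then have "\<bar>a i x z\<bar> \<le> L * b" using Lpos by (simp add: divide_le_eq mult.commute)
          then show ?thesis using a_bound[where i=i and x=x and z=z] unfolding D_def by linarith
        qed
        have "(\<Sum>i\<in>(UNIV::'n set). \<bar>p z $ i\<bar>) \<le> (\<Sum>i\<in>(UNIV::'n set). L * b + D)"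
          by (rule sum_mono) (rule pi)
        then have "norm (p z) \<le> (\<Sum>i\<in>(UNIV::'n set). L * b + D)"
          using norm_le_l1_cart[of "p z"] by linarith
        then show "z \<in> p -` cball 0 R'" by (simp add: R'_def)
      qed
      have cl: "closed ((\<lambda>z. \<alpha> (x, z)) -` Kc)"
        using continuous_on_closed_vimage[of UNIV "\<lambda>z. \<alpha> (x, z)"] cz compact_imp_closed[OF Kc] by auto
      have "(\<lambda>z. \<alpha> (x, z)) -` Kc = (p -` cball 0 R') \<inter> ((\<lambda>z. \<alpha> (x, z)) -` Kc)" using sub by blast
      moreover have "compact ((p -` cball 0 R') \<inter> ((\<lambda>z. \<alpha> (x, z)) -` Kc))"
        by (rule compact_Int_closed[OF pprop[OF compact_cball] cl])
      ultimately show ?thesis by simp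
    qed
    then show ?thesis using cz by (simp add: proper_map_fun_def)
  qed
  show ?thesis using P1 P2 P3 P4 by blast
qed

end
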